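(* Let $\mathcal{G}=(\mathcal{V},\mathcal{E})$ be a graph with $E=|\mathcal{E}|$ edges, and let $\epsilon>0$ and $\gamma\in(0,1)$. Consider the algorithm which, on input $w:\mathcal{E}\to\mathbb{R}^+$, samples independently for each edge $e$ a random variable $X_e\sim\mathrm{Lap}(1/\epsilon)$, sets $w'(e)=w(e)+X_e+(1/\epsilon)\ln(E/\gamma)$, outputs $w'$, and for each pair of vertices $x,y$ takes as the released path between $x$ and $y$ a minimum-weight path from $x$ to $y$ in $(\mathcal{G},w')$. This algorithm is $\epsilon$-differentially private on $\mathcal{G}$, and with probability at least $1-\gamma$, simultaneously for all pairs of vertices $s,t\in\mathcal{V}$: if there exists a path from $s$ to $t$ with $k$ edges and $w$-weight $W$, then the released path from $s$ to $t$ has $w$-weight at most $W+(2k/\epsilon)\ln(E/\gamma)$.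
   Context: Private edge weight model: for a graph $\mathcal{G}=(\mathcal{V},\mathcal{E})$, a weight function is $w:\mathcal{E}\to\mathbb{R}^+$ (nonnegative reals). Two weight functions $w,w'$ are neighboring if $\sum_{e\in\mathcal{E}}|w(e)-w'(e)|\le 1$. A randomized algorithm $\mathcal{A}$ on weight functions is $\epsilon$-differentially private on $\mathcal{G}$ if for all neighboring $w,w'$ and all sets $S$ of outputs, $\Pr[\mathcal{A}(w)\in S]\le e^{\epsilon}\Pr[\mathcal{A}(w')\in S]$. $\mathrm{Lap}(b)$ is the Laplace distribution with density $\frac{1}{2b}e^{-|x|/b}$. The weight of a path under a weight function is the sum of the weights of its edges. *)

theory Defs
  imports "HOL-Probability.Probability"
begin

definition laplace :: "real \<Rightarrow> real measure" where
  "laplace b = density lborel (\<lambda>x. ennreal (exp (- \<bar>x\<bar> / b) / (2 * b)))"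

text \<open>Graphs: finite vertex set Vs, edge set Es of 2-element subsets of Vs (undirected).
  Weight functions are functions on edges; only values on Es matter.\<close>
definition graph :: "'v set \<Rightarrow> 'v set set \<Rightarrow> bool" where
  "graph Vs Es \<longleftrightarrow> finite Vs \<and> (\<forall>e\<in>Es. e \<subseteq> Vs \<and> card e = 2)"

definition nonneg_weight :: "'v set set \<Rightarrow> ('v set \<Rightarrow> real) \<Rightarrow> bool" where
  "nonneg_weight Es w \<longleftrightarrow> (\<forall>e\<in>Es. w e \<ge> 0)"

definition neighboring :: "'v set set \<Rightarrow> ('v set \<Rightarrow> real) \<Rightarrow> ('v set \<Rightarrow> real) \<Rightarrow> bool" where
  "neighboring Es w w' \<longleftrightarrow> (\<Sum>e\<in>Es. \<bar>w e - w' e\<bar>) \<le> 1"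

definition diff_private :: "'v set set \<Rightarrow> real \<Rightarrow> (('v set \<Rightarrow> real) \<Rightarrow> 'b measure) \<Rightarrow> bool" where
  "diff_private Es eps A \<longleftrightarrow>
     (\<forall>w w'. nonneg_weight Es w \<and> nonneg_weight Es w' \<and> neighboring Es w w' \<longrightarrow>
        (\<forall>S \<in> sets (A w). measure (A w) S \<le> exp eps * measure (A w') S))"

definition is_path :: "'v set \<Rightarrow> 'v set set \<Rightarrow> 'v \<Rightarrow> 'v \<Rightarrow> 'v list \<Rightarrow> bool" where
  "is_path Vs Es s t p \<longleftrightarrow> p \<noteq> [] \<and> hd p = s \<and> last p = t \<and> distinct p \<and> set p \<subseteq> Vs \<and>
     (\<forall>i < length p - 1. {p ! i, p ! Suc i} \<in> Es)"

definition path_edges :: "'v list \<Rightarrow> 'v set list" where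
  "path_edges p = map (\<lambda>i. {p ! i, p ! Suc i}) [0..<length p - 1]"

definition num_edges :: "'v list \<Rightarrow> nat" where
  "num_edges p = length (path_edges p)"

definition path_weight :: "('v set \<Rightarrow> real) \<Rightarrow> 'v list \<Rightarrow> real" where
  "path_weight w p = sum_list (map w (path_edges p))"

definition min_weight_path :: "'v set \<Rightarrow> 'v set set \<Rightarrow> ('v set \<Rightarrow> real) \<Rightarrow> 'v \<Rightarrow> 'v \<Rightarrow> 'v list \<Rightarrow> bool" where
  "min_weight_path Vs Es w s t p \<longleftrightarrow> is_path Vs Es s t p \<and>
     (\<forall>q. is_path Vs Es s t q \<longrightarrow> path_weight w p \<le> path_weight w q)"

definition noisy_weights :: "'v set set \<Rightarrow> real \<Rightarrow> real \<Rightarrow> ('v set \<Rightarrow> real) \<Rightarrow> ('v set \<Rightarrow> real) measure" where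
  "noisy_weights Es eps gam w =
     distr (PiM Es (\<lambda>_. laplace (1 / eps))) (PiM Es (\<lambda>_. borel))
       (\<lambda>X. \<lambda>e\<in>Es. w e + X e + (1 / eps) * ln (real (card Es) / gam))"

end

theory Submission
  imports Defs "HOL-Real_Asymp.Real_Asymp"
begin

definition lapd :: "real \<Rightarrow> real \<Rightarrow> real" where
  "lapd b x = exp (- \<bar>x\<bar> / b) / (2 * b)"

lemma lapd_nonneg: "b > 0 \<Longrightarrow> 0 \<le> lapd b x"
  by (simp add: lapd_def)

lemma lapd_meas[measurable]: "lapd b \<in> borel_measurable borel"
  unfolding lapd_def by measurable

lemma laplace_eq: "laplace b = density lborel (\<lambda>x. ennreal (lapd b x))"
  by (simp add: laplace_def lapd_def)

lemma lap_tail: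
  assumes b: "b > 0" and a: "a \<ge> 0"
  shows "(\<integral>\<^sup>+x. ennreal (lapd b x) * indicator {a..} x \<partial>lborel) = ennreal (exp (- a / b) / 2)"
proof -
  have "(\<integral>\<^sup>+x. ennreal (lapd b x) * indicator {a..} x \<partial>lborel) = 0 - (- exp (- a / b) / 2)"
  proof (rule nn_integral_FTC_atLeast)
    fix x assume x: "a \<le> x"
    then have ax: "\<bar>x\<bar> = x" using a by simp
    show "((\<lambda>x. - exp (- x / b) / 2) has_real_derivative lapd b x) (at x)"
      unfolding lapd_def ax using b
      by (auto intro!: derivative_eq_intros simp: field_simps)
    show "0 \<le> lapd b x" using b by (rule lapd_nonneg)
  next
    show "((\<lambda>x. - exp (- x / b) / 2) \<longlongrightarrow> 0) at_top" using b by real_asymp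
  qed simp
  then show ?thesis by simp
qed

lemma lap_reflect:
  assumes b: "b > 0"
  shows "(\<integral>\<^sup>+x. ennreal (lapd b x) * indicator {..a} x \<partial>lborel)
       = (\<integral>\<^sup>+x. ennreal (lapd b x) * indicator {-a..} x \<partial>lborel)"
proof -
  have "(\<integral>\<^sup>+x. ennreal (lapd b x) * indicator {..a} x \<partial>lborel)
      = (\<integral>\<^sup>+x. ennreal (lapd b (0 + -1 * x)) * indicator {..a} (0 + -1 * x) \<partial>lborel)"
    using nn_integral_real_affine[where c="-1" and t=0 and f="\<lambda>x. ennreal (lapd b x) * indicator {..a} x"] by simp
  also have "\<dots> = (\<integral>\<^sup>+x. ennreal (lapd b x) * indicator {-a..} x \<partial>lborel)"
    by (intro nn_integral_cong) (auto simp: lapd_def split: split_indicator)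
  finally show ?thesis .
qed

lemma lap_total:
  assumes b: "b > 0"
  shows "(\<integral>\<^sup>+x. ennreal (lapd b x) \<partial>lborel) = 1"
proof -
  have "(\<integral>\<^sup>+x. ennreal (lapd b x) \<partial>lborel)
     = (\<integral>\<^sup>+x. ennreal (lapd b x) * indicator {0<..} x + ennreal (lapd b x) * indicator {..0} x \<partial>lborel)"
    by (intro nn_integral_cong) (auto split: split_indicator)
  also have "\<dots> = (\<integral>\<^sup>+x. ennreal (lapd b x) * indicator {0<..} x \<partial>lborel) + (\<integral>\<^sup>+x. ennreal (lapd b x) * indicator {..0} x \<partial>lborel)"
    by (rule nn_integral_add) auto
  also have "(\<integral>\<^sup>+x. ennreal (lapd b x) * indicator {0<..} x \<partial>lborel) = (\<integral>\<^sup>+x. ennreal (lapd b x) * indicator {0..} x \<partial>lborel)"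
    by (intro nn_integral_cong_AE) (use AE_lborel_singleton[of 0] in \<open>auto split: split_indicator\<close>)
  also have "(\<integral>\<^sup>+x. ennreal (lapd b x) * indicator {..0} x \<partial>lborel) = (\<integral>\<^sup>+x. ennreal (lapd b x) * indicator {0..} x \<partial>lborel)"
    using lap_reflect[OF b, of 0] by simp
  also have "(\<integral>\<^sup>+x. ennreal (lapd b x) * indicator {0..} x \<partial>lborel) = ennreal (1/2)"
    using lap_tail[OF b, of 0] by simp
  also have "ennreal (1/2) + ennreal (1/2) = 1"
    by (subst ennreal_plus[symmetric]) auto
  finally show ?thesis .
qed

lemma prob_space_laplace: "b > 0 \<Longrightarrow> prob_space (laplace b)"
  unfolding laplace_eq
  by (rule prob_spaceI) (simp add: emeasure_density lap_total)

lemma laplace_tail_bound: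
  assumes b: "b > 0" and L: "L \<ge> 0"
  shows "emeasure (laplace b) {x. L < \<bar>x\<bar>} \<le> ennreal (exp (- L / b))"
proof -
  have "emeasure (laplace b) {x. L < \<bar>x\<bar>} = (\<integral>\<^sup>+x. ennreal (lapd b x) * indicator {x. L < \<bar>x\<bar>} x \<partial>lborel)"
    unfolding laplace_eq by (subst emeasure_density) auto
  also have "\<dots> \<le> (\<integral>\<^sup>+x. ennreal (lapd b x) * indicator {L..} x + ennreal (lapd b x) * indicator {..-L} x \<partial>lborel)"
    by (intro nn_integral_mono) (auto split: split_indicator)
  also have "\<dots> = (\<integral>\<^sup>+x. ennreal (lapd b x) * indicator {L..} x \<partial>lborel) + (\<integral>\<^sup>+x. ennreal (lapd b x) * indicator {..-L} x \<partial>lborel)"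
    by (rule nn_integral_add) auto
  also have "\<dots> = ennreal (exp (- L / b) / 2) + ennreal (exp (- L / b) / 2)"
    using lap_reflect[OF b, of "-L"] lap_tail[OF b L] by simp
  also have "\<dots> = ennreal (exp (- L / b))"
    by (simp flip: ennreal_plus)
  finally show ?thesis .
qed

lemma laplace_shift:
  assumes B: "B \<in> sets borel"
  shows "emeasure (laplace b) {x. d + x \<in> B} = emeasure (density lborel (\<lambda>x. ennreal (lapd b (x - d)))) B"
proof -
  have "emeasure (density lborel (\<lambda>x. ennreal (lapd b (x - d)))) B
      = (\<integral>\<^sup>+x. ennreal (lapd b (x - d)) * indicator B x \<partial>lborel)"
    using B by (subst emeasure_density) auto
  also have "\<dots> = (\<integral>\<^sup>+x. ennreal (lapd b (d + 1 * x - d)) * indicator B (d + 1 * x) \<partial>lborel)"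
    using B nn_integral_real_affine[where c="1" and t=d and f="\<lambda>x. ennreal (lapd b (x - d)) * indicator B x"] by simp
  also have "\<dots> = (\<integral>\<^sup>+x. ennreal (lapd b x) * indicator {x. d + x \<in> B} x \<partial>lborel)"
    by (intro nn_integral_cong) (auto split: split_indicator)
  also have "\<dots> = emeasure (laplace b) {x. d + x \<in> B}"
    unfolding laplace_eq using B by (subst emeasure_density) auto
  finally show ?thesis ..
qed

lemma space_laplace[simp]: "space (laplace b) = UNIV"
  unfolding laplace_def by simp

lemma prob_space_shift:
  assumes "b > 0"
  shows "prob_space (density lborel (\<lambda>x. ennreal (lapd b (x - d))))"
proof (rule prob_spaceI)
  have 1: "emeasure (laplace b) UNIV = 1"
    using prob_space.emeasure_space_1[OF prob_space_laplace[OF assms]] unfolding space_laplace .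
  have 2: "emeasure (laplace b) {x. d + x \<in> UNIV} = emeasure (density lborel (\<lambda>x. ennreal (lapd b (x - d)))) UNIV"
    by (rule laplace_shift) (rule sets.top[of borel, unfolded space_borel])
  have 3: "{x::real. d + x \<in> UNIV} = UNIV" by blast
  have 4: "emeasure (density lborel (\<lambda>x. ennreal (lapd b (x - d)))) UNIV = 1"
    using 1 2 unfolding 3 by metis
  show "emeasure (density lborel (\<lambda>x. ennreal (lapd b (x - d)))) (space (density lborel (\<lambda>x. ennreal (lapd b (x - d))))) = 1"
    unfolding space_density space_lborel space_borel by (rule 4)
qed

lemma PiM_density_lborel:
  fixes f :: "'i \<Rightarrow> real \<Rightarrow> ennreal"
  assumes I: "finite I" and fm[measurable]: "\<And>i. f i \<in> borel_measurable borel"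
    and ps: "\<And>i. prob_space (density lborel (f i))"
  shows "PiM I (\<lambda>i. density lborel (f i)) = density (PiM I (\<lambda>_. lborel)) (\<lambda>x. \<Prod>i\<in>I. f i (x i))"
proof -
  interpret P: product_prob_space "\<lambda>i. density lborel (f i)"
    by (intro product_prob_spaceI ps)
  interpret L: product_sigma_finite "\<lambda>_. lborel :: real measure"
    by standard
  have m: "(\<lambda>x. \<Prod>i\<in>I. f i (x i)) \<in> borel_measurable (PiM I (\<lambda>_. lborel))"
    by measurable
  show ?thesis
  proof (rule P.PiM_eqI[symmetric, OF I])
    show "sets (density (PiM I (\<lambda>_. lborel)) (\<lambda>x. \<Prod>i\<in>I. f i (x i))) = sets (PiM I (\<lambda>i. density lborel (f i)))"
      unfolding sets_density by (rule sets_PiM_cong) auto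
  next
    fix A assume A: "\<And>i. i \<in> I \<Longrightarrow> A i \<in> sets (density lborel (f i))"
    then have Ab: "\<And>i. i \<in> I \<Longrightarrow> A i \<in> sets borel" by simp
    have mi: "(\<lambda>y. f i y * indicator (A i) y) \<in> borel_measurable lborel" if i: "i \<in> I" for i
    proof -
      have [measurable]: "A i \<in> sets borel" using Ab[OF i] .
      show ?thesis by measurable
    qed
    have PA: "Pi\<^sub>E I A \<in> sets (PiM I (\<lambda>_. lborel))"
      using Ab by (intro sets_PiM_I_finite I) auto
    have "emeasure (density (PiM I (\<lambda>_. lborel)) (\<lambda>x. \<Prod>i\<in>I. f i (x i))) (Pi\<^sub>E I A)
        = (\<integral>\<^sup>+x. (\<Prod>i\<in>I. f i (x i)) * indicator (Pi\<^sub>E I A) x \<partial>PiM I (\<lambda>_. lborel))"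
      by (rule emeasure_density[OF m PA])
    also have "\<dots> = (\<integral>\<^sup>+x. (\<Prod>i\<in>I. f i (x i) * indicator (A i) (x i)) \<partial>PiM I (\<lambda>_. lborel))"
    proof (rule nn_integral_cong)
      fix x assume "x \<in> space (PiM I (\<lambda>_. lborel :: real measure))"
      then have x: "x \<in> extensional I" by (simp add: space_PiM PiE_def)
      have ind: "indicator (Pi\<^sub>E I A) x = (\<Prod>i\<in>I. indicator (A i) (x i) :: ennreal)"
      proof (cases "x \<in> Pi\<^sub>E I A")
        case True then have "\<forall>i\<in>I. x i \<in> A i" by (simp add: PiE_iff)
        then show ?thesis using True by simp
      next
        case False
        then obtain i where i: "i \<in> I" "x i \<notin> A i" using x by (auto simp: PiE_iff)
        have "(\<Prod>i\<in>I. indicator (A i) (x i) :: ennreal) = 0"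
          using i by (intro prod_zero[OF I] bexI[of _ i]) (auto simp: indicator_def)
        then show ?thesis using False by simp
      qed
      show "(\<Prod>i\<in>I. f i (x i)) * indicator (Pi\<^sub>E I A) x = (\<Prod>i\<in>I. f i (x i) * indicator (A i) (x i))"
        unfolding ind by (rule prod.distrib[symmetric])
    qed
    also have "\<dots> = (\<Prod>i\<in>I. \<integral>\<^sup>+y. f i y * indicator (A i) y \<partial>lborel)"
      by (rule L.product_nn_integral_prod[OF I mi])
    also have "\<dots> = (\<Prod>i\<in>I. emeasure (density lborel (f i)) (A i))"
    proof (rule prod.cong[OF refl])
      fix i assume i: "i \<in> I"
      show "(\<integral>\<^sup>+y. f i y * indicator (A i) y \<partial>lborel) = emeasure (density lborel (f i)) (A i)"
        by (rule emeasure_density[symmetric]) (use Ab[OF i] in auto)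
    qed
    finally show "emeasure (density (PiM I (\<lambda>_. lborel)) (\<lambda>x. \<Prod>i\<in>I. f i (x i))) (Pi\<^sub>E I A) = (\<Prod>i\<in>I. emeasure (density lborel (f i)) (A i))" .
  qed
qed

lemma sets_laplace[measurable_cong]: "sets (laplace b) = sets borel"
  unfolding laplace_def by simp

lemma lapd_ratio:
  assumes b: "b > 0"
  shows "lapd b u \<le> exp (\<bar>u - v\<bar> / b) * lapd b v"
proof -
  have "- \<bar>u\<bar> / b \<le> \<bar>u - v\<bar> / b + - \<bar>v\<bar> / b"
    using b by (simp add: field_simps)
  then have "exp (- \<bar>u\<bar> / b) \<le> exp (\<bar>u - v\<bar> / b) * exp (- \<bar>v\<bar> / b)"
    by (simp flip: exp_add)
  then have "exp (- \<bar>u\<bar> / b) / (2 * b) \<le> exp (\<bar>u - v\<bar> / b) * exp (- \<bar>v\<bar> / b) / (2 * b)"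
    by (rule divide_right_mono) (use b in auto)
  then show ?thesis unfolding lapd_def by simp
qed

lemma prod_ratio:
  assumes b: "b > 0" and I: "finite I"
  shows "(\<Prod>e\<in>I. lapd b (y e - p e)) \<le> exp ((\<Sum>e\<in>I. \<bar>p e - q e\<bar>) / b) * (\<Prod>e\<in>I. lapd b (y e - q e))"
proof -
  have "(\<Prod>e\<in>I. lapd b (y e - p e)) \<le> (\<Prod>e\<in>I. exp (\<bar>p e - q e\<bar> / b) * lapd b (y e - q e))"
  proof (rule prod_mono)
    fix e assume "e \<in> I"
    have eq: "\<bar>(y e - p e) - (y e - q e)\<bar> = \<bar>p e - q e\<bar>" by linarith
    show "0 \<le> lapd b (y e - p e) \<and> lapd b (y e - p e) \<le> exp (\<bar>p e - q e\<bar> / b) * lapd b (y e - q e)"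
      using lapd_nonneg[OF b, of "y e - p e"] lapd_ratio[OF b, of "y e - p e" "y e - q e"]
      unfolding eq by blast
  qed
  also have "\<dots> = (\<Prod>e\<in>I. exp (\<bar>p e - q e\<bar> / b)) * (\<Prod>e\<in>I. lapd b (y e - q e))"
    by (rule prod.distrib)
  also have "(\<Prod>e\<in>I. exp (\<bar>p e - q e\<bar> / b)) = exp ((\<Sum>e\<in>I. \<bar>p e - q e\<bar>) / b)"
    unfolding sum_divide_distrib by (rule exp_sum[OF I, symmetric])
  finally show ?thesis .
qed

lemma g_meas:
  "(\<lambda>X. \<lambda>e\<in>Es. w e + X e + c) \<in> PiM Es (\<lambda>_. laplace b) \<rightarrow>\<^sub>M PiM Es (\<lambda>_. borel)"
proof (rule measurable_restrict)
  fix e assume e: "e \<in> Es"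
  have "(\<lambda>X. X e) \<in> PiM Es (\<lambda>_. laplace b) \<rightarrow>\<^sub>M laplace b"
    using e by (rule measurable_component_singleton)
  then have "(\<lambda>X. X e) \<in> borel_measurable (PiM Es (\<lambda>_. laplace b))"
    by (simp only: measurable_cong_sets[OF refl sets_laplace])
  then show "(\<lambda>X. w e + X e + c) \<in> borel_measurable (PiM Es (\<lambda>_. laplace b))"
    by measurable
qed

lemma noisy_PiM:
  fixes gam :: real
  assumes eps: "eps > 0" and I: "finite Es"
  defines "c \<equiv> (1 / eps) * ln (real (card Es) / gam)"
  shows "noisy_weights Es eps gam w
       = PiM Es (\<lambda>e. density lborel (\<lambda>x. ennreal (lapd (1/eps) (x - (w e + c)))))"
proof -
  define b where "b = 1 / eps"
  have b: "b > 0" using eps by (simp add: b_def)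
  let ?N = "\<lambda>e. density lborel (\<lambda>x. ennreal (lapd b (x - (w e + c))))"
  interpret N: product_prob_space ?N
    by (intro product_prob_spaceI prob_space_shift b)
  interpret L: product_prob_space "\<lambda>_. laplace b"
    by (intro product_prob_spaceI prob_space_laplace b)
  have g[measurable]: "(\<lambda>X. \<lambda>e\<in>Es. w e + X e + c) \<in> PiM Es (\<lambda>_. laplace b) \<rightarrow>\<^sub>M PiM Es (\<lambda>_. borel)"
    by (rule g_meas)
  have "noisy_weights Es eps gam w = PiM Es ?N"
  proof (rule N.PiM_eqI[OF I])
    show "sets (noisy_weights Es eps gam w) = sets (PiM Es ?N)"
      unfolding noisy_weights_def sets_distr by (rule sets_PiM_cong) auto
  next
    fix A assume A: "\<And>i. i \<in> Es \<Longrightarrow> A i \<in> sets (?N i)"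
    then have Ab[measurable]: "\<And>i. i \<in> Es \<Longrightarrow> A i \<in> sets borel" by simp
    have PA: "Pi\<^sub>E Es A \<in> sets (PiM Es (\<lambda>_. borel))"
      using Ab by (intro sets_PiM_I_finite I) auto
    have pre: "(\<lambda>X. \<lambda>e\<in>Es. w e + X e + c) -` Pi\<^sub>E Es A \<inter> space (PiM Es (\<lambda>_. laplace b))
        = Pi\<^sub>E Es (\<lambda>e. {x. (w e + c) + x \<in> A e})"
    proof (intro set_eqI iffI)
      fix X assume X: "X \<in> (\<lambda>X. \<lambda>e\<in>Es. w e + X e + c) -` Pi\<^sub>E Es A \<inter> space (PiM Es (\<lambda>_. laplace b))"
      then have ext: "X \<in> extensional Es" by (simp add: space_PiM PiE_def)
      have "\<forall>e\<in>Es. (w e + c) + X e \<in> A e"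
      proof
        fix e assume e: "e \<in> Es"
        from X have "(\<lambda>e\<in>Es. w e + X e + c) \<in> Pi\<^sub>E Es A" by blast
        then have "(\<lambda>e\<in>Es. w e + X e + c) e \<in> A e" using e by (rule PiE_mem)
        then show "(w e + c) + X e \<in> A e" using e by (simp add: algebra_simps)
      qed
      with ext show "X \<in> Pi\<^sub>E Es (\<lambda>e. {x. (w e + c) + x \<in> A e})" by (simp add: PiE_iff)
    next
      fix X assume X: "X \<in> Pi\<^sub>E Es (\<lambda>e. {x. (w e + c) + x \<in> A e})"
      then have ext: "X \<in> extensional Es" by (simp add: PiE_def)
      have "(\<lambda>e\<in>Es. w e + X e + c) \<in> Pi\<^sub>E Es A"
      proof (rule PiE_I)
        fix e assume e: "e \<in> Es"
        then have "(w e + c) + X e \<in> A e" using X by (simp add: PiE_iff)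
        then show "(\<lambda>e\<in>Es. w e + X e + c) e \<in> A e" using e by (simp add: algebra_simps)
      qed simp
      moreover have "X \<in> space (PiM Es (\<lambda>_. laplace b))"
        using ext by (simp add: space_PiM PiE_def)
      ultimately show "X \<in> (\<lambda>X. \<lambda>e\<in>Es. w e + X e + c) -` Pi\<^sub>E Es A \<inter> space (PiM Es (\<lambda>_. laplace b))"
        by blast
    qed
    have "emeasure (noisy_weights Es eps gam w) (Pi\<^sub>E Es A)
        = emeasure (PiM Es (\<lambda>_. laplace b)) ((\<lambda>X. \<lambda>e\<in>Es. w e + X e + c) -` Pi\<^sub>E Es A \<inter> space (PiM Es (\<lambda>_. laplace b)))"
      unfolding noisy_weights_def unfolding c_def[symmetric] unfolding b_def[symmetric]
      by (rule emeasure_distr[OF g PA])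
    also have "\<dots> = (\<Prod>e\<in>Es. emeasure (laplace b) {x. (w e + c) + x \<in> A e})"
      unfolding pre
    proof (rule L.emeasure_PiM[OF I])
      fix e assume e: "e \<in> Es"
      have [measurable]: "A e \<in> sets borel" using Ab[OF e] .
      have "{x \<in> space borel. (w e + c) + x \<in> A e} \<in> sets borel" by measurable
      then show "{x. (w e + c) + x \<in> A e} \<in> sets (laplace b)" unfolding sets_laplace by simp
    qed
    also have "\<dots> = (\<Prod>e\<in>Es. emeasure (?N e) (A e))"
    proof (rule prod.cong[OF refl])
      fix e assume e: "e \<in> Es"
      show "emeasure (laplace b) {x. (w e + c) + x \<in> A e} = emeasure (?N e) (A e)"
        by (rule laplace_shift[OF Ab[OF e]])
    qed
    finally show "emeasure (noisy_weights Es eps gam w) (Pi\<^sub>E Es A) = (\<Prod>e\<in>Es. emeasure (?N e) (A e))" .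
  qed
  then show ?thesis unfolding b_def .
qed

lemma sum_list_plus_const:
  "sum_list (map (\<lambda>e. f e + k) xs) = sum_list (map f xs) + k * real (length xs)"
  by (induct xs) (auto simp: algebra_simps)

lemma path_edges_subset:
  assumes "is_path Vs Es s t p"
  shows "set (path_edges p) \<subseteq> Es"
  using assms by (auto simp: is_path_def path_edges_def)

lemma utility_paths:
  assumes bnd: "\<forall>e\<in>Es. w e \<le> w' e \<and> w' e \<le> w e + 2 * c"
    and P: "is_path Vs Es s t P" and Q: "min_weight_path Vs Es w' s t Q"
  shows "path_weight w Q \<le> path_weight w P + 2 * c * real (num_edges P)"
proof -
  have QP: "is_path Vs Es s t Q" and mn: "path_weight w' Q \<le> path_weight w' P"
    using Q P by (auto simp: min_weight_path_def)
  have "path_weight w Q \<le> path_weight w' Q"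
    unfolding path_weight_def
    by (rule sum_list_mono) (use bnd path_edges_subset[OF QP] in auto)
  also have "\<dots> \<le> path_weight w' P" by (rule mn)
  also have "\<dots> \<le> sum_list (map (\<lambda>e. w e + 2 * c) (path_edges P))"
    unfolding path_weight_def
    by (rule sum_list_mono) (use bnd path_edges_subset[OF P] in auto)
  also have "\<dots> = path_weight w P + 2 * c * real (num_edges P)"
    by (simp add: sum_list_plus_const path_weight_def num_edges_def)
  finally show ?thesis .
qed

theorem theorem5p5:
  fixes Vs :: "'v set" and Es :: "'v set set" and eps gam :: real
  assumes "graph Vs Es" and "eps > 0" and "0 < gam" and "gam < 1"
  shows "diff_private Es eps (noisy_weights Es eps gam)
    \<and> (\<forall>w. nonneg_weight Es w \<longrightarrow>
         (\<exists>A \<in> sets (noisy_weights Es eps gam w).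
            measure (noisy_weights Es eps gam w) A \<ge> 1 - gam \<and>
            (\<forall>w' \<in> A. \<forall>s t P Q. is_path Vs Es s t P \<and> min_weight_path Vs Es w' s t Q \<longrightarrow>
               path_weight w Q \<le> path_weight w P
                 + (2 * real (num_edges P) / eps) * ln (real (card Es) / gam))))"
proof -
  have eps: "eps > 0" and gam: "0 < gam" "gam < 1" using assms by auto
  have I: "finite Es"
  proof (rule finite_subset)
    show "Es \<subseteq> Pow Vs" using assms(1) by (auto simp: graph_def)
    show "finite (Pow Vs)" using assms(1) by (simp add: graph_def)
  qed
  define b where "b = 1 / eps"
  define c where "c = (1 / eps) * ln (real (card Es) / gam)"
  have b: "b > 0" using eps by (simp add: b_def)
  have c0: "c \<ge> 0"
  proof (cases "card Es = 0")
    case True then show ?thesis by (simp add: c_def)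
  next
    case False
    then have "real (card Es) / gam \<ge> 1" using gam by (simp add: field_simps)
    then show ?thesis using eps by (simp add: c_def)
  qed
  define dens where "dens w = (\<lambda>y. \<Prod>e\<in>Es. ennreal (lapd b (y e - (w e + c))))" for w :: "'v set \<Rightarrow> real"
  have dens_meas: "dens w \<in> borel_measurable (PiM Es (\<lambda>_. lborel))" for w
    unfolding dens_def by measurable
  have nPiM: "noisy_weights Es eps gam w = PiM Es (\<lambda>e. density lborel (\<lambda>x. ennreal (lapd b (x - (w e + c)))))" for w
    using noisy_PiM[OF eps I, of gam w] unfolding b_def c_def .
  have nd: "noisy_weights Es eps gam w = density (PiM Es (\<lambda>_. lborel)) (dens w)" for w
    unfolding nPiM dens_def
    by (rule PiM_density_lborel[OF I]) (auto intro: prob_space_shift[OF b])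
  have ps: "prob_space (noisy_weights Es eps gam w)" for w
    unfolding nPiM by (rule prob_space_PiM) (rule prob_space_shift[OF b])
  have sets_n: "sets (noisy_weights Es eps gam w) = sets (PiM Es (\<lambda>_. borel))" for w
    by (simp add: noisy_weights_def)
  have sets_L: "sets (PiM Es (\<lambda>_. lborel :: real measure)) = sets (PiM Es (\<lambda>_. borel))"
    by (rule sets_PiM_cong) auto
  have DP: "diff_private Es eps (noisy_weights Es eps gam)"
    unfolding diff_private_def
  proof (intro allI impI ballI)
    fix w w' :: "'v set \<Rightarrow> real" and S
    assume H: "nonneg_weight Es w \<and> nonneg_weight Es w' \<and> neighboring Es w w'"
      and S: "S \<in> sets (noisy_weights Es eps gam w)"
    have nb: "(\<Sum>e\<in>Es. \<bar>w e - w' e\<bar>) \<le> 1" using H by (simp add: neighboring_def)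
    have S': "S \<in> sets (PiM Es (\<lambda>_. lborel))" using S sets_n sets_L by simp
    have pt: "dens w y \<le> ennreal (exp eps) * dens w' y" for y
    proof -
      have "(\<Prod>e\<in>Es. lapd b (y e - (w e + c)))
          \<le> exp ((\<Sum>e\<in>Es. \<bar>(w e + c) - (w' e + c)\<bar>) / b) * (\<Prod>e\<in>Es. lapd b (y e - (w' e + c)))"
        by (rule prod_ratio[OF b I])
      also have "(\<Sum>e\<in>Es. \<bar>(w e + c) - (w' e + c)\<bar>) / b = eps * (\<Sum>e\<in>Es. \<bar>w e - w' e\<bar>)"
        by (simp add: b_def)
      also have "exp (eps * (\<Sum>e\<in>Es. \<bar>w e - w' e\<bar>)) \<le> exp eps"
        using nb eps by (simp add: mult_left_le)
      then have "exp (eps * (\<Sum>e\<in>Es. \<bar>w e - w' e\<bar>)) * (\<Prod>e\<in>Es. lapd b (y e - (w' e + c)))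
          \<le> exp eps * (\<Prod>e\<in>Es. lapd b (y e - (w' e + c)))"
        by (rule mult_right_mono) (simp add: prod_nonneg lapd_nonneg[OF b])
      finally have r: "(\<Prod>e\<in>Es. lapd b (y e - (w e + c))) \<le> exp eps * (\<Prod>e\<in>Es. lapd b (y e - (w' e + c)))" .
      have "dens w y = ennreal (\<Prod>e\<in>Es. lapd b (y e - (w e + c)))"
        unfolding dens_def by (rule prod_ennreal) (simp add: lapd_nonneg[OF b])
      also have "\<dots> \<le> ennreal (exp eps * (\<Prod>e\<in>Es. lapd b (y e - (w' e + c))))"
        by (rule ennreal_leI[OF r])
      also have "\<dots> = ennreal (exp eps) * ennreal (\<Prod>e\<in>Es. lapd b (y e - (w' e + c)))"
        by (rule ennreal_mult) (auto simp: prod_nonneg lapd_nonneg[OF b])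
      also have "ennreal (\<Prod>e\<in>Es. lapd b (y e - (w' e + c))) = dens w' y"
        unfolding dens_def by (rule prod_ennreal[symmetric]) (simp add: lapd_nonneg[OF b])
      finally show ?thesis .
    qed
    have "emeasure (noisy_weights Es eps gam w) S = (\<integral>\<^sup>+y. dens w y * indicator S y \<partial>PiM Es (\<lambda>_. lborel))"
      unfolding nd by (rule emeasure_density[OF dens_meas S'])
    also have "\<dots> \<le> (\<integral>\<^sup>+y. ennreal (exp eps) * (dens w' y * indicator S y) \<partial>PiM Es (\<lambda>_. lborel))"
      by (rule nn_integral_mono) (use pt in \<open>auto simp: mult.assoc[symmetric] intro: mult_right_mono\<close>)
    also have "\<dots> = ennreal (exp eps) * (\<integral>\<^sup>+y. dens w' y * indicator S y \<partial>PiM Es (\<lambda>_. lborel))"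
      by (rule nn_integral_cmult) (use dens_meas S' in measurable)
    also have "(\<integral>\<^sup>+y. dens w' y * indicator S y \<partial>PiM Es (\<lambda>_. lborel)) = emeasure (noisy_weights Es eps gam w') S"
      unfolding nd by (rule emeasure_density[OF dens_meas S', symmetric])
    finally have em: "emeasure (noisy_weights Es eps gam w) S \<le> ennreal (exp eps) * emeasure (noisy_weights Es eps gam w') S" .
    have "ennreal (measure (noisy_weights Es eps gam w) S) \<le> ennreal (exp eps) * ennreal (measure (noisy_weights Es eps gam w') S)"
      using em by (simp add: finite_measure.emeasure_eq_measure[OF prob_space.finite_measure[OF ps]])
    also have "\<dots> = ennreal (exp eps * measure (noisy_weights Es eps gam w') S)"
      by (rule ennreal_mult[symmetric]) auto
    finally show "measure (noisy_weights Es eps gam w) S \<le> exp eps * measure (noisy_weights Es eps gam w') S"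
      by (rule ennreal_le_iff[THEN iffD1, rotated]) auto
  qed
  have UT: "\<exists>A \<in> sets (noisy_weights Es eps gam w).
            measure (noisy_weights Es eps gam w) A \<ge> 1 - gam \<and>
            (\<forall>w' \<in> A. \<forall>s t P Q. is_path Vs Es s t P \<and> min_weight_path Vs Es w' s t Q \<longrightarrow>
               path_weight w Q \<le> path_weight w P
                 + (2 * real (num_edges P) / eps) * ln (real (card Es) / gam))" for w
  proof -
    let ?M = "noisy_weights Es eps gam w"
    let ?Y = "PiM Es (\<lambda>_. borel :: real measure)"
    let ?Lp = "PiM Es (\<lambda>_. laplace b)"
    let ?g = "\<lambda>X. \<lambda>e\<in>Es. w e + X e + c"
    interpret M: prob_space ?M by (rule ps)
    interpret L: product_prob_space "\<lambda>_. laplace b"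
      by (intro product_prob_spaceI prob_space_laplace b)
    define A where "A = {y \<in> space ?Y. \<forall>e\<in>Es. w e \<le> y e \<and> y e \<le> w e + 2 * c}"
    have AY: "A \<in> sets ?Y" unfolding A_def using I by measurable
    then have AM: "A \<in> sets ?M" using sets_n by simp
    have spM: "space ?M = space ?Y" using sets_n by (rule sets_eq_imp_space_eq)
    have Mdistr: "?M = distr ?Lp ?Y ?g"
      by (simp add: noisy_weights_def b_def c_def)
    define T where "T e = Pi\<^sub>E Es (\<lambda>i. if i = e then {x. c < \<bar>x\<bar>} else UNIV)" for e
    have Tbor: "{x::real. c < \<bar>x\<bar>} \<in> sets borel" by measurable
    have Tsets: "T e \<in> sets ?Lp" for e
      unfolding T_def by (rule sets_PiM_I_finite[OF I]) (use Tbor in \<open>auto simp: sets_laplace\<close>)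
    have Tm: "emeasure ?Lp (T e) \<le> ennreal (exp (- c / b))" if e: "e \<in> Es" for e
    proof -
      have "emeasure ?Lp (T e) = (\<Prod>i\<in>Es. emeasure (laplace b) (if i = e then {x. c < \<bar>x\<bar>} else UNIV))"
        unfolding T_def by (rule L.emeasure_PiM[OF I]) (use Tbor in \<open>auto simp: sets_laplace\<close>)
      also have "\<dots> = (\<Prod>i\<in>Es. if i = e then emeasure (laplace b) {x. c < \<bar>x\<bar>} else 1)"
        by (intro prod.cong refl) (auto simp: prob_space.emeasure_space_1[OF prob_space_laplace[OF b], simplified])
      also have "\<dots> = emeasure (laplace b) {x. c < \<bar>x\<bar>}"
        using e I by simp
      also have "\<dots> \<le> ennreal (exp (- c / b))"
        by (rule laplace_tail_bound[OF b c0])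
      finally show ?thesis .
    qed
    have pre: "?g -` (space ?M - A) \<inter> space ?Lp \<subseteq> (\<Union>e\<in>Es. T e)"
    proof
      fix X assume X: "X \<in> ?g -` (space ?M - A) \<inter> space ?Lp"
      then have ext: "X \<in> extensional Es" by (simp add: space_PiM PiE_def)
      have gX: "?g X \<in> space ?Y" using X spM by blast
      then obtain e where e: "e \<in> Es" and ne: "\<not> (w e \<le> ?g X e \<and> ?g X e \<le> w e + 2 * c)"
        using X unfolding A_def by auto
      then have "c < \<bar>X e\<bar>" by auto
      then have "X \<in> T e" using ext e unfolding T_def by (auto simp: PiE_iff)
      then show "X \<in> (\<Union>e\<in>Es. T e)" using e by blast
    qed
    have gm: "?g \<in> ?Lp \<rightarrow>\<^sub>M ?Y" by (rule g_meas)
    have cA: "space ?M - A \<in> sets ?Y" using AY spM by auto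
    have "emeasure ?M (space ?M - A) = emeasure ?Lp (?g -` (space ?M - A) \<inter> space ?Lp)"
      unfolding Mdistr[symmetric, THEN arg_cong[where f=emeasure]] 
      by (subst Mdistr) (rule emeasure_distr[OF gm cA])
    also have "\<dots> \<le> emeasure ?Lp (\<Union>e\<in>Es. T e)"
      by (rule emeasure_mono[OF pre]) (use Tsets I in auto)
    also have "\<dots> \<le> (\<Sum>e\<in>Es. emeasure ?Lp (T e))"
      by (rule emeasure_subadditive_finite[OF I]) (use Tsets in auto)
    also have "\<dots> \<le> (\<Sum>e\<in>Es. ennreal (exp (- c / b)))"
      by (rule sum_mono) (rule Tm)
    also have "\<dots> = ennreal (real (card Es) * exp (- c / b))"
      by (simp add: ennreal_of_nat_eq_real_of_nat ennreal_mult)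
    also have "real (card Es) * exp (- c / b) \<le> gam"
    proof (cases "card Es = 0")
      case True then show ?thesis using gam by simp
    next
      case False
      have "c / b = ln (real (card Es) / gam)" using eps by (simp add: b_def c_def)
      then have "exp (- c / b) = gam / real (card Es)"
        using False gam by (simp add: exp_minus exp_ln)
      then show ?thesis using False by simp
    qed
    then have "ennreal (real (card Es) * exp (- c / b)) \<le> ennreal gam" by (rule ennreal_leI)
    finally have "emeasure ?M (space ?M - A) \<le> ennreal gam" .
    then have "measure ?M (space ?M - A) \<le> gam"
      using gam by (simp add: M.emeasure_eq_measure)
    moreover have "measure ?M (space ?M - A) = 1 - measure ?M A"
      by (rule M.prob_compl[OF AM])
    ultimately have meas: "measure ?M A \<ge> 1 - gam" by simp
    have paths: "\<forall>w' \<in> A. \<forall>s t P Q. is_path Vs Es s t P \<and> min_weight_path Vs Es w' s t Q \<longrightarrow>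
               path_weight w Q \<le> path_weight w P
                 + (2 * real (num_edges P) / eps) * ln (real (card Es) / gam)"
    proof (intro ballI allI impI)
      fix w' s t P Q assume w': "w' \<in> A" and PQ: "is_path Vs Es s t P \<and> min_weight_path Vs Es w' s t Q"
      have bnd: "\<forall>e\<in>Es. w e \<le> w' e \<and> w' e \<le> w e + 2 * c" using w' by (simp add: A_def)
      have "path_weight w Q \<le> path_weight w P + 2 * c * real (num_edges P)"
        using utility_paths[OF bnd] PQ by blast
      also have "2 * c * real (num_edges P) = (2 * real (num_edges P) / eps) * ln (real (card Es) / gam)"
        by (simp add: c_def)
      finally show "path_weight w Q \<le> path_weight w P + (2 * real (num_edges P) / eps) * ln (real (card Es) / gam)" .
    qed
    show ?thesis using AM meas paths by blast
  qed
  show ?thesis using DP UT by blast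
qed

end
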